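(* Let $d\ge3$. If $m(d-2,d-1,d)$ does not exist, then $m(n,k,d)$ exists for no pair of integers $(n,k)$ with $0\le n<k<d$. If $m(d-2,d,d)$ does not exist, then $m(n,d,d)$ exists for no integer $n$ with $0\le n\le d-2$.
   Context: $\mathcal{P}_d$ denotes the open cone of real symmetric positive definite $d\times d$ matrices and $\overline{\mathcal{P}_d}$ its closure. For $0\le k\le d$, $I(k,d)$ is the $d\times d$ diagonal matrix whose first $d-k$ diagonal entries are $0$ and last $k$ are $1$. For real $p\ge0$, $m(2p,k,d)$ denotes a positive measure on $\overline{\mathcal{P}_d}$ such that for all $s\in\mathcal{P}_d$, $\int_{\overline{\mathcal{P}_d}}e^{-\operatorname{tr}(sx)}\,m(2p,k,d)(dx)=(\det s)^{-p}\exp(\operatorname{tr}(s^{-1}I(k,d)))$; "exists" means such a measure exists. *)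

theory Defs
  imports "HOL-Analysis.Analysis"
begin

text \<open>Real symmetric positive definite d x d matrices, d = CARD('n).\<close>
definition pos_def_mats :: "(real^'n^'n) set" where
  "pos_def_mats = {A. transpose A = A \<and> (\<forall>x::real^'n. x \<noteq> 0 \<longrightarrow> x \<bullet> (A *v x) > 0)}"

text \<open>I(k,d): diagonal, first d-k diagonal entries 0, last k entries 1
  (indices ordered by the well-order on 'n).\<close>
definition Imat :: "nat \<Rightarrow> ((real, 'n::{finite,wellorder}) vec, 'n) vec" where
  "Imat k = (\<chi> i j. if i = j \<and> CARD('n) - k \<le> card {l. l < i} then 1 else 0)"

text \<open>Existence of m(2p,k,d): a positive (Borel) measure on the closure of the cone
  whose Laplace transform is (det s)^(-p) exp(tr(s^{-1} I(k,d))) on the open cone.\<close>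
definition m_exists :: "'n::{finite,wellorder} itself \<Rightarrow> real \<Rightarrow> nat \<Rightarrow> bool" where
  "m_exists _ p k \<longleftrightarrow>
     (\<exists>M :: ((real, 'n) vec, 'n) vec measure.
        sets M = sets borel \<and>
        emeasure M (UNIV - closure pos_def_mats) = 0 \<and>
        (\<forall>s\<in>(pos_def_mats :: ((real, 'n) vec, 'n) vec set).
           (\<integral>\<^sup>+ x. ennreal (exp (- trace (s ** x))) \<partial>M)
             = ennreal (det s powr (- p) * exp (trace (matrix_inv s ** (Imat k :: ((real, 'n) vec, 'n) vec))))))"

text \<open>m(n,k,d) with first parameter n = 2p.\<close>
definition m_exists2 :: "'n::{finite,wellorder} itself \<Rightarrow> real \<Rightarrow> nat \<Rightarrow> bool" where
  "m_exists2 T n k = m_exists T (n / 2) k"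

end

theory Submission
  imports Defs "HOL-Probability.Probability"
begin

lemma psym:
  fixes s :: "real^'n^'n"
  assumes "transpose s = s"
  shows "x \<bullet> (s *v y) = y \<bullet> (s *v x)"
  by (metis assms dot_lmul_matrix inner_commute transpose_transpose vector_transpose_matrix)

lemma pd_pos: "s \<in> pos_def_mats \<Longrightarrow> x \<noteq> 0 \<Longrightarrow> x \<bullet> (s *v x) > 0"
  by (simp add: pos_def_mats_def)

lemma pd_sym: "s \<in> pos_def_mats \<Longrightarrow> transpose s = s"
  by (simp add: pos_def_mats_def)

lemma mv_diff: "(A::real^'n^'m) *v (x - y) = A *v x - A *v y"
  by (rule linear_diff[OF matrix_vector_mul_linear])
lemma mv_add: "(A::real^'n^'m) *v (x + y) = A *v x + A *v y"
  by (rule linear_add[OF matrix_vector_mul_linear])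
lemma mv_sum: "(A::real^'n^'m) *v (sum f S) = (\<Sum>i\<in>S. A *v f i)"
  by (rule linear_sum[OF matrix_vector_mul_linear])

lemma gs_step:
  fixes s :: "real^'n^'n"
  assumes s: "s \<in> pos_def_mats" and S: "finite S" "card S < CARD('n)"
  and f: "\<forall>i\<in>S. \<forall>j\<in>S. f i \<bullet> (s *v f j) = (if i = j then 1 else 0)"
  shows "\<exists>w. w \<bullet> (s *v w) = 1 \<and> (\<forall>j\<in>S. f j \<bullet> (s *v w) = 0)"
proof -
  have "dim (span (f ` S)) \<le> card (f ` S)"
    using S(1) dim_le_card' dim_span by (metis finite_imageI)
  also have "\<dots> \<le> card S" using S(1) card_image_le by blast
  finally have "dim (span (f ` S)) < CARD('n)" using S(2) by simp
  then have "span (f ` S) \<noteq> UNIV"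
  proof (intro notI)
    assume "span (f ` S) = UNIV"
    then have "dim (span (f ` S)) = CARD('n)" by simp
    then show False using \<open>dim (span (f ` S)) < CARD('n)\<close> by simp
  qed
  then obtain u where u: "u \<notin> span (f ` S)" by blast
  define w where "w = u - (\<Sum>j\<in>S. (f j \<bullet> (s *v u)) *\<^sub>R f j)"
  have "(\<Sum>j\<in>S. (f j \<bullet> (s *v u)) *\<^sub>R f j) \<in> span (f ` S)"
    by (intro span_sum span_scale span_base) auto
  then have "w \<notin> span (f ` S)" using u unfolding w_def
    by (metis diff_add_cancel span_add)
  then have w0: "w \<noteq> 0" using span_zero by metis
  have orth: "f j \<bullet> (s *v w) = 0" if j: "j \<in> S" for j
  proof -
    have "f j \<bullet> (s *v w) = f j \<bullet> (s *v u) - (\<Sum>l\<in>S. (f l \<bullet> (s *v u)) * (f j \<bullet> (s *v f l)))"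
      unfolding w_def by (simp add: mv_diff mv_sum
          inner_diff_right inner_sum_right matrix_vector_mult_scaleR)
    also have "(\<Sum>l\<in>S. (f l \<bullet> (s *v u)) * (f j \<bullet> (s *v f l))) = f j \<bullet> (s *v u)"
    proof -
      have "(\<Sum>l\<in>S. (f l \<bullet> (s *v u)) * (f j \<bullet> (s *v f l))) = (\<Sum>l\<in>S. if l = j then f j \<bullet> (s *v u) else 0)"
        using j f by (intro sum.cong) auto
      then show ?thesis using j S(1) by simp
    qed
    finally show ?thesis by simp
  qed
  define c where "c = w \<bullet> (s *v w)"
  have c: "c > 0" using pd_pos[OF s w0] c_def by simp
  show ?thesis
    apply (rule exI[of _ "(1 / sqrt c) *\<^sub>R w"])
    using c orth by (simp add: matrix_vector_mult_scaleR c_def[symmetric] power2_eq_square[symmetric])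
qed

lemma gs_exists:
  fixes s :: "real^'n^'n"
  assumes s: "s \<in> pos_def_mats"
  shows "\<exists>f::'n \<Rightarrow> real^'n. \<forall>i j. f i \<bullet> (s *v f j) = (if i = j then 1 else 0)"
proof -
  have "\<exists>f::'n \<Rightarrow> real^'n. \<forall>i\<in>S. \<forall>j\<in>S. f i \<bullet> (s *v f j) = (if i = j then 1 else 0)"
    if "finite S" for S :: "'n set"
    using that
  proof (induction S rule: finite_induct)
    case empty then show ?case by simp
  next
    case (insert i S)
    then obtain f where f: "\<forall>i\<in>S. \<forall>j\<in>S. f i \<bullet> (s *v f j) = (if i = j then 1 else 0)" by blast
    have "card S < card (insert i S)" using insert by simp
    also have "\<dots> \<le> CARD('n)" by (rule card_mono) auto
    finally obtain w where w: "w \<bullet> (s *v w) = 1" "\<forall>j\<in>S. f j \<bullet> (s *v w) = 0"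
      using gs_step[OF s insert(1) _ f] by blast
    have sy: "\<And>x y. x \<bullet> (s *v y) = y \<bullet> (s *v x)" by (rule psym[OF pd_sym[OF s]])
    show ?case
      apply (rule exI[of _ "f(i := w)"])
      using f w insert(2) sy by auto
  qed
  from this[of UNIV] show ?thesis by simp
qed

lemma gs_mat:
  fixes s :: "real^'n^'n"
  assumes s: "s \<in> pos_def_mats"
  shows "\<exists>V::real^'n^'n. transpose V ** s ** V = mat 1"
proof -
  obtain f :: "'n \<Rightarrow> real^'n" where f: "\<And>i j. f i \<bullet> (s *v f j) = (if i = j then 1 else 0)"
    using gs_exists[OF s] by blast
  define V :: "real^'n^'n" where "V = (\<chi> r c. f c $ r)"
  have e: "(transpose V ** s ** V) $ i $ j = f i \<bullet> (s *v f j)" for i j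
    by (simp add: V_def matrix_matrix_mult_def matrix_vector_mult_def inner_vec_def transpose_def
        sum_distrib_left sum_distrib_right mult_ac matrix_mul_assoc)
       (rule sum.swap)
  have "transpose V ** s ** V = mat 1"
    by (simp add: vec_eq_iff e f mat_def)
  then show ?thesis by blast
qed

lemma mv_meas[measurable]: "(*v) (V::real^'n^'m) \<in> borel_measurable borel"
  by (intro borel_measurable_continuous_onI linear_continuous_on matrix_vector_mul_bounded_linear)

lemma emeasure_lborel_lebesgue:
  "X \<in> sets borel \<Longrightarrow> emeasure lborel X = emeasure lebesgue X"
  by simp

lemma lborel_linear:
  fixes V W :: "(real^'n::{finite,wellorder})^('n::{finite,wellorder})"
  assumes VW: "V ** W = mat 1" and WV: "W ** V = mat 1"
  shows "lborel = density (distr lborel borel ((*v) V)) (\<lambda>_. ennreal \<bar>det V\<bar>)"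
proof (rule lborel_eqI)
  fix l u :: "(real, 'n) vec" assume le: "\<And>b. b \<in> Basis \<Longrightarrow> l \<bullet> b \<le> u \<bullet> b"
  have pre: "(*v) V -` box l u = (*v) W ` box l u"
  proof (rule equalityI; rule subsetI)
    fix x assume "x \<in> (*v) V -` box l u"
    moreover have "x = W *v (V *v x)" using WV by (simp add: matrix_vector_mul_assoc)
    ultimately show "x \<in> (*v) W ` box l u" by blast
  next
    fix y assume "y \<in> (*v) W ` box l u"
    then obtain x where "x \<in> box l u" "y = W *v x" by blast
    then show "y \<in> (*v) V -` box l u" using VW by (simp add: matrix_vector_mul_assoc)
  qed
  have Xb: "(*v) W ` box l u \<in> sets borel"
    unfolding pre[symmetric] by (rule measurable_sets_borel[OF mv_meas]) simp
  have Xl: "(*v) W ` box l u \<in> lmeasurable"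
    by (rule measurable_linear_image) (auto intro: matrix_vector_mul_linear)
  have Xm: "measure lebesgue ((*v) W ` box l u) = \<bar>det W\<bar> * measure lebesgue (box l u)"
    using measure_linear_image[of "(*v) W" "box l u"] by (simp add: matrix_vector_mul_linear matrix_of_matrix_vector_mul)
  have bm: "emeasure lborel (box l u) = ennreal (measure lebesgue (box l u))"
    by (simp add: emeasure_eq_measure2)
  have dd: "\<bar>det V\<bar> * \<bar>det W\<bar> = 1"
    using arg_cong[OF VW, of det] by (simp add: det_mul abs_mult[symmetric])
  have "emeasure (density (distr lborel borel ((*v) V)) (\<lambda>_. ennreal \<bar>det V\<bar>)) (box l u)
      = ennreal \<bar>det V\<bar> * emeasure lborel ((*v) V -` box l u)"
    by (simp add: emeasure_density nn_integral_cmult_indicator emeasure_distr)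
  also have "emeasure lborel ((*v) V -` box l u) = ennreal (measure lebesgue ((*v) W ` box l u))"
    unfolding pre emeasure_lborel_lebesgue[OF Xb] by (rule emeasure_eq_measure2[OF Xl])
  also have "ennreal \<bar>det V\<bar> * \<dots> = ennreal (measure lebesgue (box l u))"
    unfolding Xm by (simp add: ennreal_mult'[symmetric] mult.assoc[symmetric] dd)
  also have "\<dots> = emeasure lborel (box l u)" using bm by simp
  also have "\<dots> = (\<Prod>b\<in>Basis. (u - l) \<bullet> b)" using le by (simp add: emeasure_lborel_box_eq)
  finally show "emeasure (density (distr lborel borel ((*v) V)) (\<lambda>_. ennreal \<bar>det V\<bar>)) (box l u) = (\<Prod>b\<in>Basis. (u - l) \<bullet> b)" .
qed simp

lemma gauss1: "(\<integral>\<^sup>+x. ennreal (exp (- x\<^sup>2)) \<partial>lborel) = ennreal (sqrt pi)"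
proof -
  define nd where "nd = normal_density 0 (1 / sqrt 2)"
  have nd: "nd x = 1 / sqrt pi * exp (- x\<^sup>2)" for x
    by (auto simp: nd_def normal_density_def power_divide real_sqrt_divide)
  interpret prob_space "density lborel (\<lambda>x. ennreal (nd x))"
    unfolding nd_def by (rule prob_space_normal_density) simp
  have "(\<integral>\<^sup>+x. ennreal (nd x) \<partial>lborel) = 1"
  proof -
    have "emeasure (density lborel (\<lambda>x. ennreal (nd x))) UNIV = (\<integral>\<^sup>+x. ennreal (nd x) * indicator UNIV x \<partial>lborel)"
      by (rule emeasure_density) (auto simp: nd_def)
    then show ?thesis using emeasure_space_1 by simp
  qed
  then have "ennreal (sqrt pi) * (\<integral>\<^sup>+x. ennreal (nd x) \<partial>lborel) = ennreal (sqrt pi)" by simp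
  also have "ennreal (sqrt pi) * (\<integral>\<^sup>+x. ennreal (nd x) \<partial>lborel) = (\<integral>\<^sup>+x. ennreal (sqrt pi) * ennreal (nd x) \<partial>lborel)"
    by (rule nn_integral_cmult[symmetric]) (simp add: nd_def)
  also have "\<dots> = (\<integral>\<^sup>+x. ennreal (exp (- x\<^sup>2)) \<partial>lborel)"
    by (intro nn_integral_cong) (simp add: nd ennreal_mult[symmetric])
  finally show ?thesis .
qed

lemma gauss_C: "(\<integral>\<^sup>+y. ennreal (exp (-(y \<bullet> y))) \<partial>(lborel :: 'a::euclidean_space measure)) = ennreal (sqrt pi ^ DIM('a))"
proof -
  interpret product_sigma_finite "\<lambda>_. lborel" by standard
  have gm: "(\<lambda>x. \<Sum>b\<in>Basis. x b *\<^sub>R b) \<in> borel_measurable (\<Pi>\<^sub>M b\<in>(Basis::'a set). lborel)"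
    by measurable
  have sq: "(\<Sum>b\<in>Basis. x b *\<^sub>R b) \<bullet> (\<Sum>b\<in>(Basis::'a set). x b *\<^sub>R b) = (\<Sum>b\<in>Basis. (x b)\<^sup>2)" for x
  proof -
    have "b \<bullet> (\<Sum>b\<in>(Basis::'a set). x b *\<^sub>R b) = x b" if "b \<in> Basis" for b
      using that by (subst inner_commute) (simp add: inner_sum_left_Basis)
    then show ?thesis by (simp add: inner_sum_left power2_eq_square)
  qed
  have "(\<integral>\<^sup>+y. ennreal (exp (-(y \<bullet> y))) \<partial>(lborel :: 'a measure))
      = (\<integral>\<^sup>+y. ennreal (exp (-(y \<bullet> y))) \<partial>distr (\<Pi>\<^sub>M b\<in>(Basis::'a set). lborel) borel (\<lambda>f. \<Sum>b\<in>Basis. f b *\<^sub>R b))"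
    by (subst lborel_eq) rule
  also have "\<dots> = (\<integral>\<^sup>+x. ennreal (exp (-((\<Sum>b\<in>Basis. x b *\<^sub>R b) \<bullet> (\<Sum>b\<in>(Basis::'a set). x b *\<^sub>R b)))) \<partial>(\<Pi>\<^sub>M b\<in>Basis. lborel))"
    using gm by (subst nn_integral_distr) auto
  also have "\<dots> = (\<integral>\<^sup>+x. (\<Prod>b\<in>(Basis::'a set). ennreal (exp (- (x b)\<^sup>2))) \<partial>(\<Pi>\<^sub>M b\<in>Basis. lborel))"
    by (intro nn_integral_cong) (simp add: sq exp_sum[symmetric] sum_negf prod_ennreal)
  also have "\<dots> = (\<Prod>b\<in>(Basis::'a set). \<integral>\<^sup>+t. ennreal (exp (- t\<^sup>2)) \<partial>lborel)"
    by (rule product_nn_integral_prod) auto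
  also have "\<dots> = ennreal (sqrt pi ^ DIM('a))"
    by (simp add: gauss1 ennreal_power)
  finally show ?thesis .
qed

lemma minv_unique:
  fixes A B :: "real^'n^'n"
  assumes "B ** A = mat 1"
  shows "matrix_inv A = B"
proof -
  have AB: "A ** B = mat 1" using assms matrix_left_right_inverse by blast
  have "A ** B = mat 1 \<and> B ** A = mat 1" using AB assms by simp
  then have ex: "\<exists>A'. A ** A' = mat 1 \<and> A' ** A = mat 1" by blast
  show ?thesis unfolding matrix_inv_def
  proof (rule someI2_ex[OF ex])
    fix A' assume h: "A ** A' = mat 1 \<and> A' ** A = mat 1"
    have "A' = A' ** (A ** B)" using AB by simp
    also have "\<dots> = (A' ** A) ** B" by (simp add: matrix_mul_assoc)
    also have "\<dots> = B" using h by simp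
    finally show "A' = B" .
  qed
qed

lemma dot_tr: "(x::real^'n) \<bullet> (transpose (V::real^'n^'m) *v z) = (V *v x) \<bullet> z"
  by (metis dot_lmul_matrix vector_transpose_matrix)

lemma dot_mv: "(e::real^'m) \<bullet> ((V::real^'n^'m) *v y) = (transpose V *v e) \<bullet> y"
  by (metis dot_tr inner_commute transpose_transpose)

lemma quad: "((V::real^'n^'m) *v y) \<bullet> (s *v (V *v y)) = y \<bullet> ((transpose V ** s ** V) *v y)"
  by (simp only: matrix_vector_mul_assoc[symmetric] dot_tr)

lemma gauss_lt:
  fixes s :: "((real, 'n::{finite,wellorder}) vec, 'n) vec" and e :: "(real, 'n) vec"
  assumes s: "s \<in> pos_def_mats"
  shows "(\<integral>\<^sup>+x. ennreal (exp (2 * (e \<bullet> x) - x \<bullet> (s *v x))) \<partial>lborel)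
     = ennreal (det s powr (-1/2) * exp (e \<bullet> (matrix_inv s *v e)) * sqrt pi ^ CARD('n))"
proof -
  obtain V :: "((real, 'n) vec, 'n) vec" where V: "transpose V ** s ** V = mat 1"
    using gs_mat[OF s] by blast
  have dV: "det V * det V * det s = 1"
    using arg_cong[OF V, of det] by (simp add: det_mul mult_ac)
  then have dV0: "det V \<noteq> 0" by auto
  have ds: "det s = 1 / (det V)^2" using dV dV0 by (simp add: field_simps power2_eq_square)
  obtain W where VW: "V ** W = mat 1" and WV: "W ** V = mat 1"
    using dV0 invertible_det_nz[of V] unfolding invertible_def by blast
  have sW: "s = transpose W ** W"
  proof -
    have "transpose W ** (transpose V ** s ** V) ** W = transpose (V ** W) ** s ** (V ** W)"
      by (simp add: matrix_transpose_mul matrix_mul_assoc)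
    then show ?thesis using V VW by simp
  qed
  have "(V ** transpose V) ** s = mat 1"
  proof -
    have "(V ** transpose V) ** s = V ** (transpose (W ** V)) ** W"
      unfolding sW by (simp add: matrix_transpose_mul matrix_mul_assoc)
    also have "\<dots> = mat 1" using WV VW by simp
    finally show ?thesis .
  qed
  then have inv: "matrix_inv s = V ** transpose V" by (rule minv_unique)
  define b where "b = transpose V *v e"
  have bb: "e \<bullet> (matrix_inv s *v e) = b \<bullet> b"
    unfolding inv b_def by (simp add: matrix_vector_mul_assoc[symmetric] dot_mv)
  have detV: "det s powr (-1/2) = \<bar>det V\<bar>"
  proof -
    have "det s powr (-1/2) = inverse (det s powr (1/2))"
      by (simp add: powr_minus[symmetric])
    also have "\<dots> = inverse (sqrt (det s))" using ds by (simp add: powr_half_sqrt)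
    also have "\<dots> = \<bar>det V\<bar>" unfolding ds by (simp add: real_sqrt_divide)
    finally show ?thesis .
  qed
  define f where "f = (\<lambda>x. ennreal (exp (2 * (e \<bullet> x) - x \<bullet> (s *v x))))"
  have fm[measurable]: "f \<in> borel_measurable borel" unfolding f_def by measurable
  have L: "lborel = density (distr lborel borel ((*v) V)) (\<lambda>_. ennreal \<bar>det V\<bar>)"
    by (rule lborel_linear[OF VW WV])
  have fV: "f (V *v y) = ennreal (exp (b \<bullet> b)) * ennreal (exp (- ((-b + y) \<bullet> (-b + y))))" for y
  proof -
    have "2 * (e \<bullet> (V *v y)) - (V *v y) \<bullet> (s *v (V *v y)) = b \<bullet> b + (- ((-b + y) \<bullet> (-b + y)))"
    proof -
      have q: "(V *v y) \<bullet> (s *v (V *v y)) = y \<bullet> y"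
        using quad[of V y s] V by simp
      have l: "e \<bullet> (V *v y) = b \<bullet> y" unfolding b_def by (rule dot_mv)
      have "(y - b) \<bullet> (y - b) = y \<bullet> y - 2 * (b \<bullet> y) + b \<bullet> b"
        by (simp add: inner_diff_left inner_diff_right inner_commute[of y b])
      then show ?thesis unfolding q l by simp
    qed
    then show ?thesis unfolding f_def by (simp add: ennreal_mult[symmetric] exp_add[symmetric])
  qed
  have "(\<integral>\<^sup>+x. f x \<partial>lborel) = (\<integral>\<^sup>+x. f x \<partial>density (distr lborel borel ((*v) V)) (\<lambda>_. ennreal \<bar>det V\<bar>))"
    using arg_cong[OF L, of "\<lambda>M. \<integral>\<^sup>+x. f x \<partial>M"] .
  also have "\<dots> = (\<integral>\<^sup>+x. ennreal \<bar>det V\<bar> * f x \<partial>distr lborel borel ((*v) V))"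
    by (subst nn_integral_density) auto
  also have "\<dots> = (\<integral>\<^sup>+y. ennreal \<bar>det V\<bar> * f (V *v y) \<partial>lborel)"
    by (subst nn_integral_distr) auto
  also have "\<dots> = (\<integral>\<^sup>+y. ennreal (\<bar>det V\<bar> * exp (b \<bullet> b)) * ennreal (exp (- ((-b + y) \<bullet> (-b + y)))) \<partial>lborel)"
    by (intro nn_integral_cong) (simp add: fV ennreal_mult mult.assoc)
  also have "\<dots> = ennreal (\<bar>det V\<bar> * exp (b \<bullet> b)) * (\<integral>\<^sup>+y. ennreal (exp (- ((-b + y) \<bullet> (-b + y)))) \<partial>lborel)"
    by (rule nn_integral_cmult) measurable
  also have "(\<integral>\<^sup>+y. ennreal (exp (- ((-b + y) \<bullet> (-b + y)))) \<partial>lborel)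
      = (\<integral>\<^sup>+z. ennreal (exp (- (z \<bullet> z))) \<partial>distr lborel borel ((+) (-b)))"
    by (subst nn_integral_distr) auto
  also have "\<dots> = (\<integral>\<^sup>+z. ennreal (exp (- (z \<bullet> z))) \<partial>(lborel :: (real, 'n) vec measure))"
    by (simp add: lborel_distr_plus)
  also have "\<dots> = ennreal (sqrt pi ^ CARD('n))"
    using gauss_C[where 'a="(real, 'n) vec"] by simp
  finally show ?thesis unfolding f_def detV bb
    by (simp add: ennreal_mult[symmetric])
qed

definition outer :: "(real, 'n::finite) vec \<Rightarrow> ((real, 'n) vec, 'n) vec" where
  "outer x = (\<chi> i j. x $ i * x $ j)"


lemma outer_cont: "continuous_on S (outer :: (real, 'n::finite) vec \<Rightarrow> _)"
  unfolding outer_def by (intro continuous_intros)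

lemma outer_meas[measurable]: "(outer :: (real, 'n::finite) vec \<Rightarrow> _) \<in> borel_measurable borel"
  by (rule borel_measurable_continuous_onI[OF outer_cont])

lemma trace_cont: "continuous_on S (\<lambda>x::((real, 'n::finite) vec, 'n) vec. trace (s ** x))"
  unfolding trace_def matrix_matrix_mult_def by (intro continuous_intros)

lemma trace_meas[measurable]: "(\<lambda>x::((real, 'n::finite) vec, 'n) vec. trace (s ** x)) \<in> borel_measurable borel"
  by (rule borel_measurable_continuous_onI[OF trace_cont])

lemma tr_outer: "trace (B ** outer x) = x \<bullet> (B *v x)"
  by (simp add: trace_def matrix_matrix_mult_def outer_def inner_vec_def matrix_vector_mult_def
      sum_distrib_left mult_ac)

lemma pd_add_outer: "s \<in> pos_def_mats \<Longrightarrow> s + outer x \<in> pos_def_mats"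
proof -
  assume s: "s \<in> pos_def_mats"
  have "transpose (outer x) = outer x" by (simp add: transpose_def outer_def vec_eq_iff mult.commute)
  moreover have "y \<bullet> (outer x *v y) = (x \<bullet> y)^2" for y
    by (simp add: outer_def inner_vec_def matrix_vector_mult_def power2_eq_square sum_distrib_left
        sum_distrib_right mult_ac)
  moreover have "transpose (s + outer x) = transpose s + transpose (outer x)"
    by (simp add: transpose_def vec_eq_iff)
  ultimately show ?thesis using s unfolding pos_def_mats_def
    by (auto simp: matrix_vector_mult_add_rdistrib inner_add_right add_pos_nonneg)
qed

lemma K_add_outer: "a \<in> closure pos_def_mats \<Longrightarrow> a + outer x \<in> closure pos_def_mats"
proof -
  assume a: "a \<in> closure pos_def_mats"
  have "(\<lambda>z. z + outer x) ` closure pos_def_mats \<subseteq> closure pos_def_mats"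
  proof (rule image_closure_subset)
    show "continuous_on (closure pos_def_mats) (\<lambda>z. z + outer x)" by (intro continuous_intros)
    show "(\<lambda>z. z + outer x) ` pos_def_mats \<subseteq> closure pos_def_mats"
      using pd_add_outer closure_subset by blast
  qed simp
  then show ?thesis using a by blast
qed

definition Q :: "((real, 'n::{finite,wellorder}) vec, 'n) vec measure \<Rightarrow> real \<Rightarrow> ((real, 'n) vec, 'n) vec \<Rightarrow> bool" where
  "Q M p A \<longleftrightarrow> sets M = sets borel \<and> emeasure M (UNIV - closure pos_def_mats) = 0 \<and>
     (\<forall>s\<in>pos_def_mats. (\<integral>\<^sup>+ x. ennreal (exp (- trace (s ** x))) \<partial>M)
        = ennreal (det s powr (- p) * exp (trace (matrix_inv s ** A))))"

lemma step:
  fixes M :: "((real, 'n::{finite,wellorder}) vec, 'n) vec measure" and e :: "(real, 'n) vec"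
  assumes Q: "Q M p A"
  shows "\<exists>M'. Q M' (p + 1/2) (A + outer e)"
proof -
  define c where "c = sqrt pi ^ CARD('n)"
  have c: "c > 0" unfolding c_def by simp
  define N where "N = density (lborel :: (real, 'n) vec measure) (\<lambda>x. ennreal (exp (2 * (e \<bullet> x)) / c))"
  have sN: "sets N = sets borel" unfolding N_def by simp
  interpret N: sigma_finite_measure N
    unfolding N_def by (subst sigma_finite_measure.sigma_finite_iff_density_finite[OF sigma_finite_lborel]) auto
  have sM: "sets M = sets borel" using Q unfolding Q_def by simp
  have M0: "emeasure M (UNIV - closure pos_def_mats) = 0" using Q unfolding Q_def by simp
  have LT: "\<And>s. s \<in> pos_def_mats \<Longrightarrow> (\<integral>\<^sup>+ x. ennreal (exp (- trace (s ** x))) \<partial>M)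
        = ennreal (det s powr (- p) * exp (trace (matrix_inv s ** A)))" using Q unfolding Q_def by simp
  define h :: "((real, 'n) vec, 'n) vec \<times> (real, 'n) vec \<Rightarrow> ((real, 'n) vec, 'n) vec"
    where "h = (\<lambda>z. fst z + outer (snd z))"
  have sMN: "sets (M \<Otimes>\<^sub>M N) = sets (borel \<Otimes>\<^sub>M borel)"
    by (rule sets_pair_measure_cong[OF sM sN])
  have hm: "h \<in> borel_measurable (M \<Otimes>\<^sub>M N)"
    unfolding measurable_cong_sets[OF sMN refl] h_def by measurable
  define M' where "M' = distr (M \<Otimes>\<^sub>M N) borel h"
  have "Q M' (p + 1/2) (A + outer e)"
    unfolding Q_def
  proof (intro conjI ballI)
    show "sets M' = sets borel" unfolding M'_def by simp
  next
    have Kb: "UNIV - closure pos_def_mats \<in> sets borel" by auto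
    have AEK: "AE a in M. a \<in> closure pos_def_mats"
      by (rule AE_I'[of "UNIV - closure pos_def_mats"]) (auto simp: null_sets_def sM M0)
    have "emeasure M' (UNIV - closure pos_def_mats)
        = emeasure (M \<Otimes>\<^sub>M N) (h -` (UNIV - closure pos_def_mats) \<inter> space (M \<Otimes>\<^sub>M N))"
      unfolding M'_def using hm Kb by (simp add: emeasure_distr)
    also have "\<dots> = (\<integral>\<^sup>+z. indicator (h -` (UNIV - closure pos_def_mats) \<inter> space (M \<Otimes>\<^sub>M N)) z \<partial>(M \<Otimes>\<^sub>M N))"
      using hm Kb by (intro nn_integral_indicator[symmetric]) (rule measurable_sets)
    also have "\<dots> = (\<integral>\<^sup>+a. \<integral>\<^sup>+x. indicator (h -` (UNIV - closure pos_def_mats) \<inter> space (M \<Otimes>\<^sub>M N)) (a, x) \<partial>N \<partial>M)"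
      using measurable_sets[OF hm Kb] by (intro N.nn_integral_fst[symmetric] borel_measurable_indicator)
    also have "\<dots> = (\<integral>\<^sup>+a. 0 \<partial>M)"
    proof (rule nn_integral_cong_AE)
      show "AE a in M. (\<integral>\<^sup>+x. indicator (h -` (UNIV - closure pos_def_mats) \<inter> space (M \<Otimes>\<^sub>M N)) (a, x) \<partial>N) = 0"
        using AEK
      proof eventually_elim
        case (elim a)
        then show ?case by (simp add: h_def K_add_outer indicator_def)
      qed
    qed
    finally show "emeasure M' (UNIV - closure pos_def_mats) = 0" by simp
  next
    fix s :: "((real, 'n) vec, 'n) vec" assume s: "s \<in> pos_def_mats"
    define G where "G = det s powr (-1/2) * exp (e \<bullet> (matrix_inv s *v e))"
    have G0: "G \<ge> 0" unfolding G_def by simp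
    have inner: "(\<integral>\<^sup>+x. ennreal (exp (- (x \<bullet> (s *v x)))) \<partial>N) = ennreal G"
    proof -
      have "(\<integral>\<^sup>+x. ennreal (exp (- (x \<bullet> (s *v x)))) \<partial>N)
          = (\<integral>\<^sup>+x. ennreal (exp (2 * (e \<bullet> x)) / c) * ennreal (exp (- (x \<bullet> (s *v x)))) \<partial>lborel)"
        unfolding N_def by (subst nn_integral_density) auto
      also have "\<dots> = (\<integral>\<^sup>+x. ennreal (1 / c) * ennreal (exp (2 * (e \<bullet> x) - x \<bullet> (s *v x))) \<partial>lborel)"
        using c by (intro nn_integral_cong) (simp add: ennreal_mult[symmetric] exp_diff field_simps exp_minus)
      also have "\<dots> = ennreal (1 / c) * (\<integral>\<^sup>+x. ennreal (exp (2 * (e \<bullet> x) - x \<bullet> (s *v x))) \<partial>lborel)"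
        by (rule nn_integral_cmult) measurable
      also have "\<dots> = ennreal (1 / c) * ennreal (G * c)"
        unfolding gauss_lt[OF s] G_def c_def by simp
      also have "\<dots> = ennreal G" using c G0 by (simp add: ennreal_mult[symmetric])
      finally show ?thesis .
    qed
    have "(\<integral>\<^sup>+ x. ennreal (exp (- trace (s ** x))) \<partial>M')
        = (\<integral>\<^sup>+ z. ennreal (exp (- trace (s ** h z))) \<partial>(M \<Otimes>\<^sub>M N))"
      unfolding M'_def using hm by (subst nn_integral_distr) auto
    also have "\<dots> = (\<integral>\<^sup>+a. \<integral>\<^sup>+x. ennreal (exp (- trace (s ** h (a, x)))) \<partial>N \<partial>M)"
      using hm by (intro N.nn_integral_fst[symmetric]) measurable
    also have "\<dots> = (\<integral>\<^sup>+a. ennreal (exp (- trace (s ** a))) * ennreal G \<partial>M)"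
    proof (rule nn_integral_cong)
      fix a
      have "(\<integral>\<^sup>+x. ennreal (exp (- trace (s ** h (a, x)))) \<partial>N)
          = (\<integral>\<^sup>+x. ennreal (exp (- trace (s ** a))) * ennreal (exp (- (x \<bullet> (s *v x)))) \<partial>N)"
        by (intro nn_integral_cong)
          (simp add: h_def matrix_add_ldistrib trace_add tr_outer ennreal_mult[symmetric] exp_add[symmetric])
      also have "\<dots> = ennreal (exp (- trace (s ** a))) * ennreal G"
        by (subst nn_integral_cmult) (auto simp: inner measurable_cong_sets[OF sN refl])
      finally show "(\<integral>\<^sup>+x. ennreal (exp (- trace (s ** h (a, x)))) \<partial>N) = ennreal (exp (- trace (s ** a))) * ennreal G" .
    qed
    also have "\<dots> = (\<integral>\<^sup>+a. ennreal (exp (- trace (s ** a))) \<partial>M) * ennreal G"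
      by (rule nn_integral_multc) (simp add: measurable_cong_sets[OF sM refl])
    also have "\<dots> = ennreal (det s powr (- p) * exp (trace (matrix_inv s ** A))) * ennreal G"
      using LT[OF s] by simp
    also have "\<dots> = ennreal (det s powr (- (p + 1/2)) * exp (trace (matrix_inv s ** (A + outer e))))"
    proof -
      have pw: "det s powr (- (p + 1/2)) = det s powr (-p) * det s powr (-1/2)"
        by (subst powr_add[symmetric]) simp
      show ?thesis unfolding G_def pw
        by (simp add: ennreal_mult[symmetric] matrix_add_ldistrib trace_add tr_outer exp_add mult_ac)
    qed
    finally show "(\<integral>\<^sup>+ x. ennreal (exp (- trace (s ** x))) \<partial>M')
        = ennreal (det s powr (- (p + 1/2)) * exp (trace (matrix_inv s ** (A + outer e))))" .
  qed
  then show ?thesis by blast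
qed

lemma rank_lt: "card {l. l < (i::'n::{finite,wellorder})} < CARD('n)"
proof -
  have "{l. l < i} \<subset> UNIV" by auto
  then show ?thesis by (rule psubset_card_mono[OF finite])
qed

lemma rank_inj: "inj (\<lambda>i::'n::{finite,wellorder}. card {l. l < i})"
proof (rule injI)
  fix i j :: 'n assume eq: "card {l. l < i} = card {l. l < j}"
  show "i = j"
  proof (rule ccontr)
    assume "i \<noteq> j"
    then have "i < j \<or> j < i" by auto
    then show False
    proof
      assume "i < j"
      then have "{l. l < i} \<subset> {l. l < j}" by auto
      then have "card {l. l < i} < card {l. l < j}" by (rule psubset_card_mono[OF finite])
      then show False using eq by simp
    next
      assume "j < i"
      then have "{l. l < j} \<subset> {l. l < i}" by auto
      then have "card {l. l < j} < card {l. l < i}" by (rule psubset_card_mono[OF finite])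
      then show False using eq by simp
    qed
  qed
qed

lemma rank_surj:
  assumes "m < CARD('n::{finite,wellorder})"
  shows "\<exists>i::'n. card {l. l < i} = m"
proof -
  let ?r = "\<lambda>i::'n. card {l. l < i}"
  have sub: "?r ` UNIV \<subseteq> {0..<CARD('n)}" using rank_lt by auto
  have "card (?r ` UNIV) = CARD('n)" using card_image[OF rank_inj[where 'n='n]] by simp
  then have "?r ` UNIV = {0..<CARD('n)}" using sub by (intro card_subset_eq) auto
  then have "m \<in> ?r ` UNIV" using assms by simp
  then show ?thesis by blast
qed

lemma Imat_Suc:
  assumes k: "k < CARD('n::{finite,wellorder})"
  shows "\<exists>e. (Imat (Suc k) :: ((real, 'n) vec, 'n) vec) = Imat k + outer e"
proof -
  obtain i0 :: 'n where i0: "card {l. l < i0} = CARD('n) - Suc k"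
    using rank_surj[where 'n='n, of "CARD('n) - Suc k"] k by auto
  have uniq: "card {l. l < i} = CARD('n) - Suc k \<longleftrightarrow> i = i0" for i
      proof
    assume "card {l. l < i} = CARD('n) - Suc k"
    then have "card {l. l < i} = card {l. l < i0}" using i0 by simp
    then show "i = i0" using injD[OF rank_inj[where 'n='n]] by blast
  qed (use i0 in simp)
  have "(Imat (Suc k) :: ((real, 'n) vec, 'n) vec) = Imat k + outer (axis i0 1)"
  proof -
    have c: "(CARD('n) - Suc k \<le> card {l. l < i}) \<longleftrightarrow> (CARD('n) - k \<le> card {l. l < i} \<or> i = i0)" for i
      using uniq[of i] k by auto
    have i0n: "\<not> (CARD('n) - k \<le> card {l. l < i0})" using i0 k by simp
    have "(Imat (Suc k) :: ((real, 'n) vec, 'n) vec) $ i $ j = (Imat k + outer (axis i0 1)) $ i $ j" for i j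
    proof (cases "i = i0")
      case True
      then show ?thesis using i0n c[of i] by (simp add: Imat_def outer_def axis_def)
    next
      case False
      then show ?thesis using c[of i] by (simp add: Imat_def outer_def axis_def)
    qed
    then show ?thesis by (simp add: vec_eq_iff)
  qed
  then show ?thesis by blast
qed

lemma iterE:
  fixes M :: "((real, 'n::{finite,wellorder}) vec, 'n) vec measure"
  shows "Q M p (Imat k) \<Longrightarrow> k + j \<le> CARD('n) \<Longrightarrow> \<exists>M'::((real, 'n) vec, 'n) vec measure. Q M' (p + real j / 2) (Imat (k + j))"
proof (induction j)
  case 0 then show ?case by auto
next
  case (Suc j)
  then obtain M1 :: "((real, 'n) vec, 'n) vec measure" where M1: "Q M1 (p + real j / 2) (Imat (k + j))" by auto
  obtain e :: "(real, 'n) vec" where e: "(Imat (Suc (k + j)) :: ((real, 'n) vec, 'n) vec) = Imat (k + j) + outer e"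
    using Imat_Suc[where 'n='n, of "k + j"] Suc.prems by auto
  obtain M2 where "Q M2 (p + real j / 2 + 1/2) (Imat (k + j) + outer e)"
    using step[OF M1] by blast
  moreover have "p + real j / 2 + 1/2 = p + real (Suc j) / 2" by simp
  ultimately show ?case using e by auto
qed

lemma outer0: "outer 0 = 0"
  by (simp add: outer_def vec_eq_iff)

lemma iterR:
  fixes M :: "((real, 'n::{finite,wellorder}) vec, 'n) vec measure"
  shows "Q M p A \<Longrightarrow> \<exists>M'::((real, 'n) vec, 'n) vec measure. Q M' (p + real j / 2) A"
proof (induction j)
  case 0 then show ?case by auto
next
  case (Suc j)
  then obtain M1 :: "((real, 'n) vec, 'n) vec measure" where M1: "Q M1 (p + real j / 2) A" by auto
  obtain M2 where "Q M2 (p + real j / 2 + 1/2) (A + outer 0)"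
    using step[OF M1] by blast
  moreover have "p + real j / 2 + 1/2 = p + real (Suc j) / 2" by simp
  ultimately show ?case by (auto simp: outer0)
qed

lemma m2_Q: "m_exists2 TYPE('n::{finite,wellorder}) n k \<longleftrightarrow> (\<exists>M::((real, 'n) vec, 'n) vec measure. Q M (n / 2) (Imat k))"
  unfolding m_exists2_def m_exists_def Q_def by simp

theorem proposition2p3:
  assumes "CARD('n::{finite,wellorder}) \<ge> 3"
  shows "(\<not> m_exists2 TYPE('n) (real CARD('n) - 2) (CARD('n) - 1) \<longrightarrow>
            (\<forall>n k :: nat. n < k \<and> k < CARD('n) \<longrightarrow> \<not> m_exists2 TYPE('n) (real n) k))
       \<and> (\<not> m_exists2 TYPE('n) (real CARD('n) - 2) CARD('n) \<longrightarrow>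
            (\<forall>n :: nat. n \<le> CARD('n) - 2 \<longrightarrow> \<not> m_exists2 TYPE('n) (real n) CARD('n)))"
proof (intro conjI impI allI notI)
  fix n k :: nat
  assume H: "\<not> m_exists2 TYPE('n) (real CARD('n) - 2) (CARD('n) - 1)"
    and nk: "n < k \<and> k < CARD('n)" and E: "m_exists2 TYPE('n) (real n) k"
  obtain M :: "((real, 'n) vec, 'n) vec measure" where M: "Q M (real n / 2) (Imat k)"
    using E unfolding m2_Q by blast
  obtain M1 :: "((real, 'n) vec, 'n) vec measure" where M1: "Q M1 (real n / 2 + real (CARD('n) - 1 - k) / 2) (Imat (k + (CARD('n) - 1 - k)))"
    using iterE[OF M, of "CARD('n) - 1 - k"] nk by auto
  obtain M2 :: "((real, 'n) vec, 'n) vec measure" where M2: "Q M2 (real n / 2 + real (CARD('n) - 1 - k) / 2 + real (k - 1 - n) / 2) (Imat (k + (CARD('n) - 1 - k)))"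
    using iterR[OF M1] by blast
  have p: "real n / 2 + real (CARD('n) - 1 - k) / 2 + real (k - 1 - n) / 2 = (real CARD('n) - 2) / 2"
    using nk by (simp add: of_nat_diff field_simps)
  have kk: "k + (CARD('n) - 1 - k) = CARD('n) - 1" using nk by simp
  have "m_exists2 TYPE('n) (real CARD('n) - 2) (CARD('n) - 1)"
    unfolding m2_Q using M2 unfolding p kk by blast
  then show False using H by simp
next
  fix n :: nat
  assume H: "\<not> m_exists2 TYPE('n) (real CARD('n) - 2) CARD('n)"
    and n: "n \<le> CARD('n) - 2" and E: "m_exists2 TYPE('n) (real n) CARD('n)"
  obtain M :: "((real, 'n) vec, 'n) vec measure" where M: "Q M (real n / 2) (Imat CARD('n))"
    using E unfolding m2_Q by blast
  obtain M2 :: "((real, 'n) vec, 'n) vec measure" where M2: "Q M2 (real n / 2 + real (CARD('n) - 2 - n) / 2) (Imat CARD('n))"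
    using iterR[OF M] by blast
  have p: "real n / 2 + real (CARD('n) - 2 - n) / 2 = (real CARD('n) - 2) / 2"
    using n assms by (simp add: of_nat_diff field_simps)
  have "m_exists2 TYPE('n) (real CARD('n) - 2) CARD('n)"
    unfolding m2_Q using M2 unfolding p by blast
  then show False using H by simp
qed

end
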